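(* Let $\mathcal{E}$ be a finite-dimensional Euclidean space, $e\in\mathcal{E}$ nonzero, $H=\{x\in\mathcal{E}:\langle e,x\rangle=1\}$, let $C\subseteq H$ be a compact convex set and $\mathcal{K}=\operatorname{cone}C$. Then for every $x\in H\setminus(-\mathcal{K}^* )$, $$\operatorname{dist}(x,C)\le\|e\|\,r\,\operatorname{dist}(x,\mathcal{K}),$$ where $r=\max_{u\in C}\|u\|$.
   Context: $\operatorname{cone}C=\{\lambda x: x\in C,\lambda\ge0\}$; $\mathcal{K}^*=\{y:\langle y,x\rangle\ge0\ \forall x\in\mathcal{K}\}$ is the dual cone. *)

theory Defs
  imports "HOL-Analysis.Analysis"
begin

definition cone_of :: "'a::real_vector set \<Rightarrow> 'a set" where
  "cone_of C = {c *\<^sub>R x | c x. c \<ge> 0 \<and> x \<in> C}"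

definition dual_cone :: "'a::real_inner set \<Rightarrow> 'a set" where
  "dual_cone K = {y. \<forall>x\<in>K. inner y x \<ge> 0}"

end

theory Submission
  imports Defs
begin

lemma keyA:
  fixes e v x :: "'a::euclidean_space"
  assumes ev: "inner e v = 1" and ex: "inner e x = 1"
  shows "norm (x - v) \<le> norm e * norm v * norm (x - (inner x v / inner v v) *\<^sub>R v)"
proof -
  have v0: "v \<noteq> 0" using ev by auto
  define n where "n = inner v v"
  have npos: "n > 0" using v0 by (simp add: n_def)
  define t where "t = inner x v / n"
  define d where "d = x - t *\<^sub>R v"
  have dv: "inner d v = 0" using npos by (simp add: d_def t_def n_def inner_diff_left)
  have xv: "x - v = d + (t - 1) *\<^sub>R v" by (simp add: d_def algebra_simps)
  have nxv: "inner (x - v) (x - v) = inner d d + (t-1)^2 * n"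
    unfolding xv using dv
    by (simp add: inner_add_left inner_add_right inner_commute n_def power2_eq_square)
  define e' where "e' = e - (1/n) *\<^sub>R v"
  have e'v: "inner e' v = 0" using npos ev by (simp add: e'_def inner_diff_left n_def)
  have ee: "inner e e = inner e' e' + 1/n"
  proof -
    have "e = e' + (1/n) *\<^sub>R v" by (simp add: e'_def)
    hence "inner e e = inner (e' + (1/n) *\<^sub>R v) (e' + (1/n) *\<^sub>R v)" by simp
    also have "\<dots> = inner e' e' + (1/n)^2 * n" using e'v
      by (simp add: inner_add_left inner_add_right inner_commute n_def power2_eq_square)
    finally show ?thesis using npos by (simp add: power2_eq_square)
  qed
  have e'd: "inner e' d = 1 - t"
    using ex ev dv by (simp add: e'_def d_def inner_diff_left inner_diff_right inner_commute)
  have cs: "(1-t)^2 \<le> inner e' e' * inner d d"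
  proof -
    have "\<bar>inner e' d\<bar> \<le> norm e' * norm d" by (rule Cauchy_Schwarz_ineq2)
    hence "(inner e' d)^2 \<le> (norm e' * norm d)^2"
      by (metis abs_ge_zero power2_abs power_mono)
    thus ?thesis using e'd by (simp add: power_mult_distrib dot_square_norm[symmetric])
  qed
  have "inner (x - v) (x - v) \<le> inner e e * n * inner d d"
  proof -
    have "inner e e * n * inner d d = inner e' e' * inner d d * n + inner d d"
      using npos by (simp add: ee field_simps)
    moreover have "(t-1)^2 * n \<le> inner e' e' * inner d d * n"
      using cs npos by (simp add: power2_commute mult_right_mono)
    ultimately show ?thesis using nxv by simp
  qed
  hence "(norm (x - v))^2 \<le> (norm e * norm v * norm d)^2"
    by (simp add: power_mult_distrib dot_square_norm[symmetric] n_def)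
  hence "norm (x - v) \<le> norm e * norm v * norm d"
    by (rule power2_le_imp_le) simp
  thus ?thesis by (simp add: d_def t_def n_def)
qed

lemma keyB:
  fixes x v :: "'a::euclidean_space"
  assumes "v \<noteq> 0"
  shows "norm (x - (inner x v / inner v v) *\<^sub>R v) \<le> norm (x - s *\<^sub>R v)"
proof -
  define n where "n = inner v v"
  have npos: "n > 0" using assms by (simp add: n_def)
  define t where "t = inner x v / n"
  have "inner (x - s *\<^sub>R v) (x - s *\<^sub>R v) = inner (x - t *\<^sub>R v) (x - t *\<^sub>R v) + (s - t)^2 * n"
    using npos by (simp add: inner_diff_left inner_diff_right inner_commute n_def t_def
        power2_eq_square field_simps)
  hence "(norm (x - t *\<^sub>R v))^2 \<le> (norm (x - s *\<^sub>R v))^2"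
    using npos by (simp add: dot_square_norm[symmetric])
  hence "norm (x - t *\<^sub>R v) \<le> norm (x - s *\<^sub>R v)"
    by (rule power2_le_imp_le) simp
  thus ?thesis by (simp add: t_def n_def)
qed

theorem proposition4p2:
  fixes e :: "'a::euclidean_space" and C :: "'a set" and x :: 'a
  assumes "e \<noteq> 0"
    and "C \<subseteq> {y. inner e y = 1}"
    and "compact C" and "convex C"
    and "inner e x = 1"
    and "x \<notin> uminus ` dual_cone (cone_of C)"
  shows "infdist x C \<le> norm e * (SUP u\<in>C. norm u) * infdist x (cone_of C)"
proof -
  define r where "r = (SUP u\<in>C. norm u)"
  have "- x \<notin> dual_cone (cone_of C)"
    using assms(6) by (metis image_eqI minus_minus)
  then obtain c where c: "c \<in> cone_of C" "inner (-x) c < 0"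
    unfolding dual_cone_def by (auto simp: not_le)
  then obtain s0 w where sw: "c = s0 *\<^sub>R w" "s0 \<ge> 0" "w \<in> C" unfolding cone_of_def by auto
  have "s0 * inner x w > 0" using c(2) sw by simp
  hence xw: "inner x w > 0" using sw(2)
    by (metis mult_eq_0_iff order_less_le zero_less_mult_pos)
  have Cne: "C \<noteq> {}" using sw by auto
  have bdd: "bdd_above (norm ` C)"
    using compact_imp_bounded[OF assms(3)] by (simp add: bounded_iff bdd_above_def)
  have nr: "norm u \<le> r" if "u \<in> C" for u
    unfolding r_def using bdd that by (rule cSUP_upper2) simp
  have ev: "inner e u = 1" if "u \<in> C" for u using assms(2) that by auto
  have A: "infdist x C \<le> norm e * r * norm (x - (inner x v / inner v v) *\<^sub>R v)"
    if "v \<in> C" for v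
  proof -
    have "infdist x C \<le> dist x v" using that by (rule infdist_le)
    also have "\<dots> \<le> norm e * norm v * norm (x - (inner x v / inner v v) *\<^sub>R v)"
      using keyA[OF ev[OF that] assms(5)] by (simp add: dist_norm)
    also have "\<dots> \<le> norm e * r * norm (x - (inner x v / inner v v) *\<^sub>R v)"
      by (intro mult_right_mono mult_left_mono nr that) auto
    finally show ?thesis .
  qed
  have v0: "v \<noteq> 0" if "v \<in> C" for v using ev[OF that] by auto
  have main: "infdist x C \<le> norm e * r * dist x k" if "k \<in> cone_of C" for k
  proof -
    obtain s v where k: "k = s *\<^sub>R v" "s \<ge> 0" "v \<in> C" using \<open>k \<in> cone_of C\<close>
      unfolding cone_of_def by auto
    have ner: "norm e * r \<ge> 0" using nr[OF sw(3)] norm_ge_zero[of w] by (meson mult_nonneg_nonneg norm_ge_zero order_trans)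
    show ?thesis
    proof (cases "inner x v > 0")
      case True
      have "infdist x C \<le> norm e * r * norm (x - (inner x v / inner v v) *\<^sub>R v)" using A k(3) .
      also have "\<dots> \<le> norm e * r * norm (x - s *\<^sub>R v)"
        by (intro mult_left_mono keyB v0 k(3) ner)
      finally show ?thesis by (simp add: k dist_norm)
    next
      case False
      have "inner (x - s *\<^sub>R v) (x - s *\<^sub>R v) = inner x x - 2 * s * inner x v + s^2 * inner v v"
        by (simp add: inner_diff_left inner_diff_right inner_commute power2_eq_square)
      moreover have "s * inner x v \<le> 0" using False k(2) by (simp add: mult_nonneg_nonpos)
      moreover have "s^2 * inner v v \<ge> 0" by simp
      ultimately have "inner x x \<le> inner (x - s *\<^sub>R v) (x - s *\<^sub>R v)" by linarith
      hence "(norm x)^2 \<le> (norm (x - s *\<^sub>R v))^2" by (simp add: dot_square_norm[symmetric])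
      hence nx: "norm x \<le> norm (x - s *\<^sub>R v)" by (rule power2_le_imp_le) simp
      have "infdist x C \<le> norm e * r * norm (x - (inner x w / inner w w) *\<^sub>R w)" using A sw(3) .
      also have "\<dots> \<le> norm e * r * norm (x - 0 *\<^sub>R w)"
        by (intro mult_left_mono keyB v0 sw(3) ner)
      also have "\<dots> \<le> norm e * r * norm (x - s *\<^sub>R v)"
        using nx ner by (simp add: mult_left_mono)
      finally show ?thesis by (simp add: k dist_norm)
    qed
  qed
  have ner: "norm e * r > 0"
  proof -
    have "1 = inner e w" using ev[OF sw(3)] by simp
    also have "\<dots> \<le> norm e * norm w" by (rule norm_cauchy_schwarz)
    also have "\<dots> \<le> norm e * r" by (intro mult_left_mono nr sw(3)) simp
    finally show ?thesis by simp
  qed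
  have Kne: "cone_of C \<noteq> {}" using c(1) by auto
  have "infdist x C / (norm e * r) \<le> infdist x (cone_of C)"
    unfolding infdist_notempty[OF Kne]
    by (rule cINF_greatest[OF Kne]) (use main ner in \<open>simp add: divide_le_eq mult.commute\<close>)
  thus ?thesis using ner by (simp add: r_def divide_le_eq mult.commute)
qed

end
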